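(* Let $\mathbb{C}$ be a pointed category with finite products that has normal projections. Then $\mathbb{C}$ has a subtractive theory of abelian objects, i.e., the following hold: (A1) for any objects $X,X'$ equipped with subtractions $s\colon X\times X\to X$ and $s'\colon X'\times X'\to X'$, every morphism $g\colon X\to X'$ is homomorphic with respect to them, i.e., $g\circ s=s'\circ(g\times g)$; (A2) on any object $X$ there is at most one subtraction, and if $s$ is a subtraction on $X$ then $s$ is the subtraction $s(x,y)=x-y$ of an internal abelian group structure on $X$; (A3) if $X,X'$ are underlying objects of internal abelian groups in $\mathbb{C}$, then every morphism $X\to X'$ is a homomorphism of these internal abelian groups.
   Context: A pointed category $\mathbb{C}$ with finite products has normal projections if for all objects $X,Y$ the product projection $\pi_2\colon X\times Y\to Y$ is a cokernel of the morphism $(1_X,0)\colon X\to X\times Y$. Using generalised elements, a morphism $s\colon X\times X\to X$ is a subtraction on $X$ if $s\circ(1_X,1_X)=0$ and $s\circ(1_X,0)=1_X$ (i.e., $s(x,x)=0$ and $s(x,0)=x$). A morphism $g\colon X\to X'$ is homomorphic with respect to subtractions $s$ on $X$ and $s'$ on $X'$ if $g(s(x,y))=s'(g(x),g(y))$, i.e., $g\circ s=s'\circ(g\times g)$. An internal abelian group in $\mathbb{C}$ is an object with morphisms for addition, zero and negation satisfying the abelian group axioms internally. *)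

theory Defs
  imports Main
begin

text \<open>A category with morphisms of type 'm and objects of type 'o
  (every element of 'm is a morphism, every element of 'o an object).
  ccomp C g f denotes g composed after f.\<close>

record ('o, 'm) cat =
  cdom  :: "'m \<Rightarrow> 'o"
  ccod  :: "'m \<Rightarrow> 'o"
  ccomp :: "'m \<Rightarrow> 'm \<Rightarrow> 'm"
  cid   :: "'o \<Rightarrow> 'm"

definition hom :: "('o, 'm) cat \<Rightarrow> 'o \<Rightarrow> 'o \<Rightarrow> 'm set" where
  "hom C X Y = {f. cdom C f = X \<and> ccod C f = Y}"

definition category :: "('o, 'm) cat \<Rightarrow> bool" where
  "category C \<longleftrightarrow>
     (\<forall>X. cid C X \<in> hom C X X) \<and>
     (\<forall>f g. ccod C f = cdom C g \<longrightarrow> ccomp C g f \<in> hom C (cdom C f) (ccod C g)) \<and>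
     (\<forall>f. ccomp C f (cid C (cdom C f)) = f \<and> ccomp C (cid C (ccod C f)) f = f) \<and>
     (\<forall>f g h. ccod C f = cdom C g \<longrightarrow> ccod C g = cdom C h \<longrightarrow>
        ccomp C h (ccomp C g f) = ccomp C (ccomp C h g) f)"

definition terminal :: "('o, 'm) cat \<Rightarrow> 'o \<Rightarrow> bool" where
  "terminal C T \<longleftrightarrow> (\<forall>X. \<exists>!f. f \<in> hom C X T)"

definition initial :: "('o, 'm) cat \<Rightarrow> 'o \<Rightarrow> bool" where
  "initial C I \<longleftrightarrow> (\<forall>X. \<exists>!f. f \<in> hom C I X)"

definition zero_object :: "('o, 'm) cat \<Rightarrow> 'o \<Rightarrow> bool" where
  "zero_object C Z \<longleftrightarrow> initial C Z \<and> terminal C Z"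

definition pointed :: "('o, 'm) cat \<Rightarrow> bool" where
  "pointed C \<longleftrightarrow> category C \<and> (\<exists>Z. zero_object C Z)"

definition zmor :: "('o, 'm) cat \<Rightarrow> 'o \<Rightarrow> 'o \<Rightarrow> 'm" where
  "zmor C X Y = (let Z = (SOME Z. zero_object C Z)
     in ccomp C (THE f. f \<in> hom C Z Y) (THE f. f \<in> hom C X Z))"

definition is_product :: "('o, 'm) cat \<Rightarrow> 'o \<Rightarrow> 'o \<Rightarrow> 'o \<Rightarrow> 'm \<Rightarrow> 'm \<Rightarrow> bool" where
  "is_product C P X Y p q \<longleftrightarrow> p \<in> hom C P X \<and> q \<in> hom C P Y \<and>
     (\<forall>T f g. f \<in> hom C T X \<longrightarrow> g \<in> hom C T Y \<longrightarrow>
        (\<exists>!h. h \<in> hom C T P \<and> ccomp C p h = f \<and> ccomp C q h = g))"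

definition has_finite_products :: "('o, 'm) cat \<Rightarrow> bool" where
  "has_finite_products C \<longleftrightarrow> (\<exists>T. terminal C T) \<and>
     (\<forall>X Y. \<exists>P p q. is_product C P X Y p q)"

definition prod_choice :: "('o, 'm) cat \<Rightarrow> 'o \<Rightarrow> 'o \<Rightarrow> 'o \<times> 'm \<times> 'm" where
  "prod_choice C X Y = (SOME (P, p, q). is_product C P X Y p q)"

definition prodobj :: "('o, 'm) cat \<Rightarrow> 'o \<Rightarrow> 'o \<Rightarrow> 'o" where
  "prodobj C X Y = fst (prod_choice C X Y)"

definition proj1 :: "('o, 'm) cat \<Rightarrow> 'o \<Rightarrow> 'o \<Rightarrow> 'm" where
  "proj1 C X Y = fst (snd (prod_choice C X Y))"

definition proj2 :: "('o, 'm) cat \<Rightarrow> 'o \<Rightarrow> 'o \<Rightarrow> 'm" where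
  "proj2 C X Y = snd (snd (prod_choice C X Y))"

definition pair :: "('o, 'm) cat \<Rightarrow> 'm \<Rightarrow> 'm \<Rightarrow> 'm" where
  "pair C f g = (THE h. h \<in> hom C (cdom C f) (prodobj C (ccod C f) (ccod C g)) \<and>
      ccomp C (proj1 C (ccod C f) (ccod C g)) h = f \<and>
      ccomp C (proj2 C (ccod C f) (ccod C g)) h = g)"

definition prodmap :: "('o, 'm) cat \<Rightarrow> 'm \<Rightarrow> 'm \<Rightarrow> 'm" where
  "prodmap C f g = pair C (ccomp C f (proj1 C (cdom C f) (cdom C g)))
                           (ccomp C g (proj2 C (cdom C f) (cdom C g)))"

definition cokernel :: "('o, 'm) cat \<Rightarrow> 'm \<Rightarrow> 'm \<Rightarrow> bool" where
  "cokernel C f q \<longleftrightarrow> cdom C q = ccod C f \<and>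
     ccomp C q f = zmor C (cdom C f) (ccod C q) \<and>
     (\<forall>g. cdom C g = ccod C f \<longrightarrow> ccomp C g f = zmor C (cdom C f) (ccod C g) \<longrightarrow>
        (\<exists>!h. h \<in> hom C (ccod C q) (ccod C g) \<and> ccomp C h q = g))"

definition normal_projections :: "('o, 'm) cat \<Rightarrow> bool" where
  "normal_projections C \<longleftrightarrow>
     (\<forall>X Y. cokernel C (pair C (cid C X) (zmor C X Y)) (proj2 C X Y))"

definition subtraction :: "('o, 'm) cat \<Rightarrow> 'o \<Rightarrow> 'm \<Rightarrow> bool" where
  "subtraction C X s \<longleftrightarrow> s \<in> hom C (prodobj C X X) X \<and>
     ccomp C s (pair C (cid C X) (cid C X)) = zmor C X X \<and>
     ccomp C s (pair C (cid C X) (zmor C X X)) = cid C X"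

definition homomorphic :: "('o, 'm) cat \<Rightarrow> 'm \<Rightarrow> 'm \<Rightarrow> 'm \<Rightarrow> bool" where
  "homomorphic C s s' g \<longleftrightarrow> ccomp C g s = ccomp C s' (prodmap C g g)"

definition term_obj :: "('o, 'm) cat \<Rightarrow> 'o" where
  "term_obj C = (SOME T. terminal C T)"

definition bang :: "('o, 'm) cat \<Rightarrow> 'o \<Rightarrow> 'm" where
  "bang C X = (THE f. f \<in> hom C X (term_obj C))"

text \<open>Internal abelian group (X, m, e, n): m : X \<times> X \<rightarrow> X, e : 1 \<rightarrow> X, n : X \<rightarrow> X,
  axioms stated with generalised elements x, y, z : T \<rightarrow> X (equivalent by Yoneda to
  the internal diagrammatic axioms).\<close>
definition internal_ab_group :: "('o, 'm) cat \<Rightarrow> 'o \<Rightarrow> 'm \<Rightarrow> 'm \<Rightarrow> 'm \<Rightarrow> bool" where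
  "internal_ab_group C X m e n \<longleftrightarrow>
     m \<in> hom C (prodobj C X X) X \<and> e \<in> hom C (term_obj C) X \<and> n \<in> hom C X X \<and>
     (\<forall>T x y z. x \<in> hom C T X \<longrightarrow> y \<in> hom C T X \<longrightarrow> z \<in> hom C T X \<longrightarrow>
        ccomp C m (pair C (ccomp C m (pair C x y)) z) =
        ccomp C m (pair C x (ccomp C m (pair C y z)))) \<and>
     (\<forall>T x. x \<in> hom C T X \<longrightarrow> ccomp C m (pair C x (ccomp C e (bang C T))) = x) \<and>
     (\<forall>T x. x \<in> hom C T X \<longrightarrow> ccomp C m (pair C x (ccomp C n x)) = ccomp C e (bang C T)) \<and>
     (\<forall>T x y. x \<in> hom C T X \<longrightarrow> y \<in> hom C T X \<longrightarrow>
        ccomp C m (pair C x y) = ccomp C m (pair C y x))"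

definition internal_group_hom :: "('o, 'm) cat \<Rightarrow> 'm \<Rightarrow> 'm \<Rightarrow> 'm \<Rightarrow> bool" where
  "internal_group_hom C m m' g \<longleftrightarrow> ccomp C g m = ccomp C m' (prodmap C g g)"

end

theory Submission
  imports Defs
begin

locale pnp =
  fixes C :: "('o, 'm) cat"
  assumes pt: "pointed C" and fp: "has_finite_products C" and np: "normal_projections C"
begin

lemma cat: "category C" using pt pointed_def by blast

lemma id_dom[simp]: "cdom C (cid C X) = X" and id_cod[simp]: "ccod C (cid C X) = X"
  using cat unfolding category_def hom_def by auto

lemma comp_dom[simp]: "ccod C f = cdom C g \<Longrightarrow> cdom C (ccomp C g f) = cdom C f"
  and comp_cod[simp]: "ccod C f = cdom C g \<Longrightarrow> ccod C (ccomp C g f) = ccod C g"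
  using cat unfolding category_def hom_def by auto

lemma comp_id_r[simp]: "cdom C f = X \<Longrightarrow> ccomp C f (cid C X) = f"
  and comp_id_l[simp]: "ccod C f = Y \<Longrightarrow> ccomp C (cid C Y) f = f"
  using cat unfolding category_def by auto

lemma assoc[simp]: "ccod C f = cdom C g \<Longrightarrow> ccod C g = cdom C h \<Longrightarrow>
   ccomp C (ccomp C h g) f = ccomp C h (ccomp C g f)"
  using cat unfolding category_def by metis

definition "Z0 = (SOME Z. zero_object C Z)"

lemma Z0: "zero_object C Z0" unfolding Z0_def using pt pointed_def someI_ex by metis

lemma to_Z0: "\<exists>!f. f \<in> hom C X Z0"
proof -
  have "terminal C Z0" using Z0 unfolding zero_object_def by (rule conjunct2)
  thus ?thesis unfolding terminal_def by (rule spec)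
qed
lemma from_Z0: "\<exists>!f. f \<in> hom C Z0 X"
proof -
  have "initial C Z0" using Z0 unfolding zero_object_def by (rule conjunct1)
  thus ?thesis unfolding initial_def by (rule spec)
qed

lemma zmor_eq: "zmor C X Y = ccomp C (THE f. f \<in> hom C Z0 Y) (THE f. f \<in> hom C X Z0)"
  unfolding zmor_def Z0_def Let_def by simp

lemma zmor_dom[simp]: "cdom C (zmor C X Y) = X" and zmor_cod[simp]: "ccod C (zmor C X Y) = Y"
proof -
  have a: "(THE f. f \<in> hom C X Z0) \<in> hom C X Z0" by (rule theI'[OF to_Z0])
  have b: "(THE f. f \<in> hom C Z0 Y) \<in> hom C Z0 Y" by (rule theI'[OF from_Z0])
  show "cdom C (zmor C X Y) = X" "ccod C (zmor C X Y) = Y"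
    using a b unfolding zmor_eq hom_def by auto
qed

lemma zmor_comp_r[simp]: "ccod C f = X \<Longrightarrow> ccomp C (zmor C X Y) f = zmor C (cdom C f) Y"
proof -
  assume f: "ccod C f = X"
  define a where "a = (THE f. f \<in> hom C X Z0)"
  define b where "b = (THE f. f \<in> hom C Z0 Y)"
  define a' where "a' = (THE g. g \<in> hom C (cdom C f) Z0)"
  have a: "a \<in> hom C X Z0" unfolding a_def by (rule theI'[OF to_Z0])
  have b: "b \<in> hom C Z0 Y" unfolding b_def by (rule theI'[OF from_Z0])
  have a': "a' \<in> hom C (cdom C f) Z0" unfolding a'_def by (rule theI'[OF to_Z0])
  have "ccomp C a f \<in> hom C (cdom C f) Z0" using a f unfolding hom_def by auto
  hence e: "ccomp C a f = a'" using a' to_Z0 by blast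
  have "ccomp C (zmor C X Y) f = ccomp C (ccomp C b a) f" unfolding zmor_eq a_def b_def ..
  also have "\<dots> = ccomp C b (ccomp C a f)" using a b f unfolding hom_def by simp
  also have "\<dots> = zmor C (cdom C f) Y" unfolding e zmor_eq a'_def b_def ..
  finally show ?thesis .
qed

lemma zmor_comp_l[simp]: "cdom C f = Y \<Longrightarrow> ccomp C f (zmor C X Y) = zmor C X (ccod C f)"
proof -
  assume f: "cdom C f = Y"
  define a where "a = (THE f. f \<in> hom C X Z0)"
  define b where "b = (THE f. f \<in> hom C Z0 Y)"
  define b' where "b' = (THE g. g \<in> hom C Z0 (ccod C f))"
  have a: "a \<in> hom C X Z0" unfolding a_def by (rule theI'[OF to_Z0])
  have b: "b \<in> hom C Z0 Y" unfolding b_def by (rule theI'[OF from_Z0])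
  have b': "b' \<in> hom C Z0 (ccod C f)" unfolding b'_def by (rule theI'[OF from_Z0])
  have "ccomp C f b \<in> hom C Z0 (ccod C f)" using b f unfolding hom_def by auto
  hence e: "ccomp C f b = b'" using b' from_Z0 by blast
  have "ccomp C f (zmor C X Y) = ccomp C f (ccomp C b a)" unfolding zmor_eq a_def b_def ..
  also have "\<dots> = ccomp C (ccomp C f b) a" using a b f unfolding hom_def by simp
  also have "\<dots> = zmor C X (ccod C f)" unfolding e zmor_eq a_def b'_def ..
  finally show ?thesis .
qed

lemma prod: "is_product C (prodobj C X Y) X Y (proj1 C X Y) (proj2 C X Y)"
proof -
  from fp obtain P p q where "is_product C P X Y p q" unfolding has_finite_products_def by blast
  hence "\<exists>t. (\<lambda>(P, p, q). is_product C P X Y p q) t" by auto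
  hence "(\<lambda>(P, p, q). is_product C P X Y p q) (prod_choice C X Y)"
    unfolding prod_choice_def by (rule someI_ex)
  thus ?thesis unfolding prodobj_def proj1_def proj2_def by (auto split: prod.splits)
qed

lemma proj1_dom[simp]: "cdom C (proj1 C X Y) = prodobj C X Y"
  and proj1_cod[simp]: "ccod C (proj1 C X Y) = X"
  and proj2_dom[simp]: "cdom C (proj2 C X Y) = prodobj C X Y"
  and proj2_cod[simp]: "ccod C (proj2 C X Y) = Y"
  using prod[of X Y] unfolding is_product_def hom_def by auto

lemma prod_univ: "f \<in> hom C T X \<Longrightarrow> g \<in> hom C T Y \<Longrightarrow>
  \<exists>!h. h \<in> hom C T (prodobj C X Y) \<and> ccomp C (proj1 C X Y) h = f \<and> ccomp C (proj2 C X Y) h = g"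
  using prod[of X Y] unfolding is_product_def by blast

lemma pair_props: assumes "cdom C f = cdom C g"
  shows "pair C f g \<in> hom C (cdom C f) (prodobj C (ccod C f) (ccod C g)) \<and>
     ccomp C (proj1 C (ccod C f) (ccod C g)) (pair C f g) = f \<and>
     ccomp C (proj2 C (ccod C f) (ccod C g)) (pair C f g) = g"
proof -
  have "\<exists>!h. h \<in> hom C (cdom C f) (prodobj C (ccod C f) (ccod C g)) \<and>
     ccomp C (proj1 C (ccod C f) (ccod C g)) h = f \<and> ccomp C (proj2 C (ccod C f) (ccod C g)) h = g"
    by (rule prod_univ) (use assms in \<open>auto simp: hom_def\<close>)
  thus ?thesis unfolding pair_def by (rule theI')
qed

lemma pair_dom[simp]: "cdom C f = cdom C g \<Longrightarrow> cdom C (pair C f g) = cdom C f"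
  and pair_cod[simp]: "cdom C f = cdom C g \<Longrightarrow> ccod C (pair C f g) = prodobj C (ccod C f) (ccod C g)"
  using pair_props unfolding hom_def by auto

lemma p1_pair[simp]: "cdom C f = cdom C g \<Longrightarrow> ccod C f = X \<Longrightarrow> ccod C g = Y \<Longrightarrow>
    ccomp C (proj1 C X Y) (pair C f g) = f"
  and p2_pair[simp]: "cdom C f = cdom C g \<Longrightarrow> ccod C f = X \<Longrightarrow> ccod C g = Y \<Longrightarrow>
    ccomp C (proj2 C X Y) (pair C f g) = g"
  using pair_props by auto

lemma pair_unique: "cdom C h = T \<Longrightarrow> ccod C h = prodobj C X Y \<Longrightarrow>
   h = pair C (ccomp C (proj1 C X Y) h) (ccomp C (proj2 C X Y) h)"
proof -
  assume h: "cdom C h = T" "ccod C h = prodobj C X Y"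
  let ?f = "ccomp C (proj1 C X Y) h" and ?g = "ccomp C (proj2 C X Y) h"
  have u: "\<exists>!k. k \<in> hom C T (prodobj C X Y) \<and> ccomp C (proj1 C X Y) k = ?f \<and> ccomp C (proj2 C X Y) k = ?g"
    by (rule prod_univ) (use h in \<open>auto simp: hom_def\<close>)
  have "pair C ?f ?g \<in> hom C T (prodobj C X Y) \<and> ccomp C (proj1 C X Y) (pair C ?f ?g) = ?f \<and>
     ccomp C (proj2 C X Y) (pair C ?f ?g) = ?g"
    using pair_props[of ?f ?g] h by simp
  moreover have "h \<in> hom C T (prodobj C X Y)" using h unfolding hom_def by auto
  ultimately show ?thesis using u by blast
qed

lemma pair_comp[simp]: "cdom C f = cdom C g \<Longrightarrow> ccod C h = cdom C f \<Longrightarrow>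
   ccomp C (pair C f g) h = pair C (ccomp C f h) (ccomp C g h)"
proof -
  assume a: "cdom C f = cdom C g" "ccod C h = cdom C f"
  let ?k = "ccomp C (pair C f g) h"
  have "?k = pair C (ccomp C (proj1 C (ccod C f) (ccod C g)) ?k) (ccomp C (proj2 C (ccod C f) (ccod C g)) ?k)"
  proof (rule pair_unique[of _ "cdom C h"])
    have c1: "cdom C (pair C f g) = cdom C f" "ccod C (pair C f g) = prodobj C (ccod C f) (ccod C g)"
      using a by simp_all
    show "cdom C ?k = cdom C h" using a c1 comp_dom by metis
    show "ccod C ?k = prodobj C (ccod C f) (ccod C g)" using a c1 comp_cod by metis
  qed
  also have "\<dots> = pair C (ccomp C f h) (ccomp C g h)"
  proof -
    have c1: "cdom C (pair C f g) = cdom C f" "ccod C (pair C f g) = prodobj C (ccod C f) (ccod C g)"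
      using a by simp_all
    have "ccomp C (ccomp C (proj1 C (ccod C f) (ccod C g)) (pair C f g)) h =
        ccomp C (proj1 C (ccod C f) (ccod C g)) ?k"
      by (rule assoc) (use a c1 in simp_all)
    moreover have "ccomp C (ccomp C (proj2 C (ccod C f) (ccod C g)) (pair C f g)) h =
        ccomp C (proj2 C (ccod C f) (ccod C g)) ?k"
      by (rule assoc) (use a c1 in simp_all)
    moreover have "ccomp C (proj1 C (ccod C f) (ccod C g)) (pair C f g) = f"
       "ccomp C (proj2 C (ccod C f) (ccod C g)) (pair C f g) = g" using a by simp_all
    ultimately show ?thesis by simp
  qed
  finally show ?thesis .
qed

lemma pair_proj[simp]: "pair C (proj1 C X Y) (proj2 C X Y) = cid C (prodobj C X Y)"
  using pair_unique[of "cid C (prodobj C X Y)" "prodobj C X Y" X Y] by simp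


lemma term_ex: "terminal C (term_obj C)"
  using fp unfolding has_finite_products_def term_obj_def by (metis someI_ex)

lemma bang_hom: "bang C T \<in> hom C T (term_obj C)"
  using term_ex unfolding terminal_def bang_def by (metis theI')

lemma bang_dom[simp]: "cdom C (bang C T) = T" and bang_cod[simp]: "ccod C (bang C T) = term_obj C"
  using bang_hom unfolding hom_def by auto

lemma term_init: assumes "f \<in> hom C (term_obj C) X" shows "f = zmor C (term_obj C) X"
proof -
  obtain u where u: "u \<in> hom C Z0 (term_obj C)" using from_Z0 by blast
  obtain v where v: "v \<in> hom C (term_obj C) Z0" using to_Z0 by blast
  have "ccomp C u v \<in> hom C (term_obj C) (term_obj C)" using u v unfolding hom_def by auto
  moreover have "cid C (term_obj C) \<in> hom C (term_obj C) (term_obj C)" unfolding hom_def by auto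
  ultimately have uv: "ccomp C u v = cid C (term_obj C)" using term_ex unfolding terminal_def by blast
  have "ccomp C f u \<in> hom C Z0 X" "ccomp C (zmor C (term_obj C) X) u \<in> hom C Z0 X"
    using u assms unfolding hom_def by auto
  hence fu: "ccomp C f u = ccomp C (zmor C (term_obj C) X) u" using from_Z0 by blast
  have "f = ccomp C f (ccomp C u v)" using assms unfolding uv hom_def by simp
  also have "\<dots> = ccomp C (ccomp C f u) v" using u v assms unfolding hom_def by simp
  also have "\<dots> = ccomp C (ccomp C (zmor C (term_obj C) X) u) v" unfolding fu ..
  also have "\<dots> = zmor C (term_obj C) X" using u v unfolding hom_def by (simp del: zmor_comp_r add: uv)
  finally show ?thesis .
qed

lemma L:
  assumes f: "cdom C f = prodobj C X Y" "ccod C f = Z"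
    and f0: "ccomp C f (pair C (cid C X) (zmor C X Y)) = zmor C X Z"
    and x: "cdom C x = T" "ccod C x = X" and y: "cdom C y = T" "ccod C y = Y"
  shows "ccomp C f (pair C x y) = ccomp C f (pair C (zmor C T X) y)"
proof -
  have ck: "cokernel C (pair C (cid C X) (zmor C X Y)) (proj2 C X Y)"
    using np unfolding normal_projections_def by simp
  have pd: "cdom C (pair C (cid C X) (zmor C X Y)) = X"
    "ccod C (pair C (cid C X) (zmor C X Y)) = prodobj C X Y" by simp_all
  have "\<forall>g. cdom C g = ccod C (pair C (cid C X) (zmor C X Y)) \<longrightarrow>
     ccomp C g (pair C (cid C X) (zmor C X Y)) = zmor C (cdom C (pair C (cid C X) (zmor C X Y))) (ccod C g) \<longrightarrow>
        (\<exists>!h. h \<in> hom C (ccod C (proj2 C X Y)) (ccod C g) \<and> ccomp C h (proj2 C X Y) = g)"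
    using ck unfolding cokernel_def by (elim conjE)
  hence "\<exists>!h. h \<in> hom C (ccod C (proj2 C X Y)) (ccod C f) \<and> ccomp C h (proj2 C X Y) = f"
    unfolding pd using f f0 by (metis (no_types, lifting))
  hence "\<exists>h. h \<in> hom C Y Z \<and> ccomp C h (proj2 C X Y) = f" using f by (simp add: ex1_implies_ex)
  then obtain h where h: "cdom C h = Y" "ccod C h = Z" "ccomp C h (proj2 C X Y) = f"
    unfolding hom_def by blast
  have "ccomp C f (pair C x y) = ccomp C (ccomp C h (proj2 C X Y)) (pair C x y)" using h by simp
  also have "\<dots> = ccomp C h y" using h(1,2) x y by simp
  also have "\<dots> = ccomp C (ccomp C h (proj2 C X Y)) (pair C (zmor C T X) y)" using h(1,2) x y by simp
  finally show ?thesis using h by simp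
qed

lemma sub_dom: "subtraction C X s \<Longrightarrow> cdom C s = prodobj C X X"
  and sub_cod: "subtraction C X s \<Longrightarrow> ccod C s = X"
  unfolding subtraction_def hom_def by auto

lemma sub_xx[simp]: assumes s: "subtraction C X s" and x: "ccod C x = X"
  shows "ccomp C s (pair C x x) = zmor C (cdom C x) X"
proof -
  have "ccomp C (ccomp C s (pair C (cid C X) (cid C X))) x = zmor C (cdom C x) X"
    using s x unfolding subtraction_def by simp
  thus ?thesis using s x sub_dom sub_cod by simp
qed

lemma sub_x0[simp]: assumes s: "subtraction C X s" and x: "ccod C x = X" "cdom C x = T"
  shows "ccomp C s (pair C x (zmor C T X)) = x"
proof -
  have "ccomp C (ccomp C s (pair C (cid C X) (zmor C X X))) x = x"
    using s x unfolding subtraction_def by simp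
  thus ?thesis using s x sub_dom sub_cod by simp
qed

lemma sub_c: assumes s: "subtraction C X s" and x: "cdom C x = T" "ccod C x = X"
  and y: "cdom C y = T" "ccod C y = X"
  shows "ccomp C s (pair C x (ccomp C s (pair C x y))) = y"
proof -
  note sd[simp] = sub_dom[OF s] sub_cod[OF s] sub_xx[OF s] sub_x0[OF s]
  define f where "f = ccomp C s (pair C (proj1 C X X) (ccomp C s (pair C (proj1 C X X) (proj2 C X X))))"
  have fd: "cdom C f = prodobj C X X" "ccod C f = X" unfolding f_def by simp_all
  have f0: "ccomp C f (pair C (cid C X) (zmor C X X)) = zmor C X X" unfolding f_def by simp
  have "ccomp C f (pair C (cid C X) (cid C X)) = ccomp C f (pair C (zmor C X X) (cid C X))"
    by (rule L[OF fd f0]) simp_all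
  hence e: "ccomp C s (pair C (zmor C X X) (ccomp C s (pair C (zmor C X X) (cid C X)))) = cid C X"
    unfolding f_def by simp
  have "ccomp C f (pair C x y) = ccomp C f (pair C (zmor C T X) y)"
    by (rule L[OF fd f0]) (simp_all add: x y)
  also have "\<dots> = ccomp C (ccomp C s (pair C (zmor C X X) (ccomp C s (pair C (zmor C X X) (cid C X))))) y"
    unfolding f_def using y by simp
  also have "\<dots> = y" unfolding e using y by simp
  finally show ?thesis unfolding f_def using x y by simp
qed

lemma sub_zero_eq: assumes s: "subtraction C X s" and a: "cdom C a = T" "ccod C a = X"
  and b: "cdom C b = T" "ccod C b = X" and e: "ccomp C s (pair C a b) = zmor C T X"
  shows "a = b"
proof -
  have "ccomp C s (pair C a (ccomp C s (pair C a b))) = b" by (rule sub_c[OF s a b])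
  thus ?thesis unfolding e using s a by (metis sub_x0)
qed

lemma J: assumes s: "subtraction C Z s"
  and f1: "cdom C f1 = prodobj C X Y" "ccod C f1 = Z"
  and f2: "cdom C f2 = prodobj C X Y" "ccod C f2 = Z"
  and e1: "ccomp C f1 (pair C (cid C X) (zmor C X Y)) = ccomp C f2 (pair C (cid C X) (zmor C X Y))"
  and e2: "ccomp C f1 (pair C (zmor C Y X) (cid C Y)) = ccomp C f2 (pair C (zmor C Y X) (cid C Y))"
  shows "f1 = f2"
proof -
  note sd[simp] = sub_dom[OF s] sub_cod[OF s] sub_xx[OF s] sub_x0[OF s]
  note [simp] = f1 f2
  define F where "F = ccomp C s (pair C f1 f2)"
  have Fd: "cdom C F = prodobj C X Y" "ccod C F = Z" unfolding F_def by simp_all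
  have F0: "ccomp C F (pair C (cid C X) (zmor C X Y)) = zmor C X Z" unfolding F_def using e1 by simp
  have "ccomp C F (pair C (proj1 C X Y) (proj2 C X Y)) = ccomp C F (pair C (zmor C (prodobj C X Y) X) (proj2 C X Y))"
    by (rule L[OF Fd F0]) simp_all
  also have "\<dots> = ccomp C s (pair C (ccomp C (ccomp C f1 (pair C (zmor C Y X) (cid C Y))) (proj2 C X Y))
      (ccomp C (ccomp C f2 (pair C (zmor C Y X) (cid C Y))) (proj2 C X Y)))"
    unfolding F_def by simp
  also have "\<dots> = zmor C (prodobj C X Y) Z" unfolding e2 by simp
  finally have "ccomp C s (pair C f1 f2) = zmor C (prodobj C X Y) Z" unfolding F_def by simp
  thus ?thesis by (rule sub_zero_eq[OF s f1 f2])
qed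

lemma N: assumes s: "subtraction C Z s"
  and f: "cdom C f = prodobj C X X" "ccod C f = Z" and h: "cdom C h = X" "ccod C h = Z"
  and f10: "ccomp C f (pair C (cid C X) (zmor C X X)) = h"
  and f11: "ccomp C f (pair C (cid C X) (cid C X)) = zmor C X Z"
  shows "ccomp C f (pair C (zmor C X X) (cid C X)) = ccomp C s (pair C (zmor C X Z) h)"
proof -
  note sd[simp] = sub_dom[OF s] sub_cod[OF s] sub_xx[OF s] sub_x0[OF s]
  note [simp] = f h
  define G where "G = ccomp C s (pair C f (ccomp C h (proj1 C X X)))"
  have Gd: "cdom C G = prodobj C X X" "ccod C G = Z" unfolding G_def by simp_all
  have G0: "ccomp C G (pair C (cid C X) (zmor C X X)) = zmor C X Z" unfolding G_def using f10 by simp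
  have "ccomp C G (pair C (cid C X) (cid C X)) = ccomp C G (pair C (zmor C X X) (cid C X))"
    by (rule L[OF Gd G0]) simp_all
  thus ?thesis unfolding G_def using f11 by simp
qed


lemma A1: assumes s: "subtraction C X s" and s': "subtraction C X' s'" and g: "g \<in> hom C X X'"
  shows "homomorphic C s s' g"
proof -
  note [simp] = sub_dom[OF s] sub_cod[OF s] sub_xx[OF s] sub_x0[OF s]
  note [simp] = sub_dom[OF s'] sub_cod[OF s'] sub_xx[OF s'] sub_x0[OF s']
  have gd[simp]: "cdom C g = X" "ccod C g = X'" using g unfolding hom_def by auto
  have n: "ccomp C (ccomp C g s) (pair C (zmor C X X) (cid C X)) = ccomp C s' (pair C (zmor C X X') g)"
    by (rule N[OF s']) simp_all
  show ?thesis unfolding homomorphic_def prodmap_def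
    by (rule J[OF s', where X=X and Y=X]) (use n in simp_all)
qed

lemma A2u: assumes s: "subtraction C X s" and t: "subtraction C X t" shows "s = t"
proof -
  note [simp] = sub_dom[OF s] sub_cod[OF s] sub_xx[OF s] sub_x0[OF s]
  note [simp] = sub_dom[OF t] sub_cod[OF t] sub_xx[OF t] sub_x0[OF t]
  have n: "ccomp C t (pair C (zmor C X X) (cid C X)) = ccomp C s (pair C (zmor C X X) (cid C X))"
    by (rule N[OF s]) simp_all
  show ?thesis by (rule J[OF s, where X=X and Y=X]) (use n in simp_all)
qed

lemma A2e: assumes s: "subtraction C X s"
  shows "\<exists>m e n. internal_ab_group C X m e n \<and> s = ccomp C m (prodmap C (cid C X) n)"
proof -
  note [simp] = sub_dom[OF s] sub_cod[OF s] sub_xx[OF s] sub_x0[OF s]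
  have nn[simp]: "ccomp C s (pair C (zmor C T X) (ccomp C s (pair C (zmor C T X) x))) = x"
    if "cdom C x = T" "ccod C x = X" for x T
    by (rule sub_c[OF s]) (use that in simp_all)
  define n where "n = ccomp C s (pair C (zmor C X X) (cid C X))"
  define m where "m = ccomp C s (pair C (proj1 C X X) (ccomp C n (proj2 C X X)))"
  define e where "e = zmor C (term_obj C) X"
  have comm: "ccomp C m (pair C (proj1 C X X) (proj2 C X X)) = ccomp C m (pair C (proj2 C X X) (proj1 C X X))"
    by (rule J[OF s, where X=X and Y=X]) (simp_all add: m_def n_def)
  define P where "P = prodobj C X X"
  define q1 where "q1 = ccomp C (proj1 C X X) (proj1 C P X)"
  define q2 where "q2 = ccomp C (proj2 C X X) (proj1 C P X)"
  define r where "r = proj2 C P X"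
  have ass: "ccomp C m (pair C (ccomp C m (pair C q1 q2)) r) = ccomp C m (pair C q1 (ccomp C m (pair C q2 r)))"
    by (rule J[OF s, where X=P and Y=X]) (simp_all add: m_def n_def q1_def q2_def r_def P_def)
  have h1: "cdom C m = prodobj C X X" "ccod C m = X" "cdom C e = term_obj C" "ccod C e = X"
     "cdom C n = X" "ccod C n = X" by (simp_all add: m_def n_def e_def)
  have h2: "ccomp C m (pair C (ccomp C m (pair C x y)) z) = ccomp C m (pair C x (ccomp C m (pair C y z)))"
    if "cdom C x = T" "ccod C x = X" "cdom C y = T" "ccod C y = X" "cdom C z = T" "ccod C z = X" for T x y z
  proof -
    have "ccomp C (ccomp C m (pair C (ccomp C m (pair C q1 q2)) r)) (pair C (pair C x y) z) =
      ccomp C (ccomp C m (pair C q1 (ccomp C m (pair C q2 r)))) (pair C (pair C x y) z)" unfolding ass ..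
    thus ?thesis using that by (simp add: m_def n_def q1_def q2_def r_def P_def)
  qed
  have h3: "ccomp C m (pair C x (ccomp C e (bang C T))) = x" if "cdom C x = T" "ccod C x = X" for T x
    using that by (simp add: m_def n_def e_def)
  have h4: "ccomp C m (pair C x (ccomp C n x)) = ccomp C e (bang C T)" if "cdom C x = T" "ccod C x = X" for T x
    using that by (simp add: m_def n_def e_def)
  have h5: "ccomp C m (pair C x y) = ccomp C m (pair C y x)"
    if "cdom C x = T" "ccod C x = X" "cdom C y = T" "ccod C y = X" for T x y
  proof -
    have "ccomp C (ccomp C m (pair C (proj1 C X X) (proj2 C X X))) (pair C x y) =
       ccomp C (ccomp C m (pair C (proj2 C X X) (proj1 C X X))) (pair C x y)" unfolding comm ..
    thus ?thesis using that by (simp add: m_def n_def)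
  qed
  have "internal_ab_group C X m e n"
    unfolding internal_ab_group_def hom_def mem_Collect_eq
    using h1 h2 h3 h4 h5 by blast
  moreover have "s = ccomp C m (prodmap C (cid C X) n)"
    unfolding prodmap_def by (simp add: m_def n_def)
  ultimately show ?thesis by blast
qed

lemma iag: assumes "internal_ab_group C X m e n"
  shows "cdom C m = prodobj C X X" "ccod C m = X" "cdom C n = X" "ccod C n = X"
  and "\<And>x T. ccod C x = X \<Longrightarrow> cdom C x = T \<Longrightarrow> ccomp C m (pair C x (zmor C T X)) = x"
  and "\<And>x. ccod C x = X \<Longrightarrow> ccomp C m (pair C x (ccomp C n x)) = zmor C (cdom C x) X"
  and "\<And>x y. ccod C x = X \<Longrightarrow> ccod C y = X \<Longrightarrow> cdom C x = cdom C y \<Longrightarrow>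
     ccomp C m (pair C x y) = ccomp C m (pair C y x)"
proof -
  have A: "m \<in> hom C (prodobj C X X) X" and B: "e \<in> hom C (term_obj C) X" and Cn: "n \<in> hom C X X"
    and Asc: "\<forall>T x y z. x \<in> hom C T X \<longrightarrow> y \<in> hom C T X \<longrightarrow> z \<in> hom C T X \<longrightarrow>
        ccomp C m (pair C (ccomp C m (pair C x y)) z) =
        ccomp C m (pair C x (ccomp C m (pair C y z)))"
    and U: "\<forall>T x. x \<in> hom C T X \<longrightarrow> ccomp C m (pair C x (ccomp C e (bang C T))) = x"
    and I: "\<forall>T x. x \<in> hom C T X \<longrightarrow> ccomp C m (pair C x (ccomp C n x)) = ccomp C e (bang C T)"
    and Cm: "\<forall>T x y. x \<in> hom C T X \<longrightarrow> y \<in> hom C T X \<longrightarrow>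
        ccomp C m (pair C x y) = ccomp C m (pair C y x)"
    using assms unfolding internal_ab_group_def by blast+
  have e: "e = zmor C (term_obj C) X" using B by (rule term_init)
  have eb: "ccomp C e (bang C T) = zmor C T X" for T unfolding e by simp
  show "cdom C m = prodobj C X X" "ccod C m = X" "cdom C n = X" "ccod C n = X"
    using A Cn unfolding hom_def by auto
  show "ccomp C m (pair C x (zmor C T X)) = x" if "ccod C x = X" "cdom C x = T" for x T
  proof -
    have "x \<in> hom C T X" using that unfolding hom_def by simp
    thus ?thesis using U[rule_format, of x T] unfolding eb by simp
  qed
  show "ccomp C m (pair C x (ccomp C n x)) = zmor C (cdom C x) X" if "ccod C x = X" for x
  proof -
    have "x \<in> hom C (cdom C x) X" using that unfolding hom_def by simp
    thus ?thesis using I[rule_format, of x "cdom C x"] unfolding eb by simp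
  qed
  show "ccomp C m (pair C x y) = ccomp C m (pair C y x)"
    if "ccod C x = X" "ccod C y = X" "cdom C x = cdom C y" for x y
  proof -
    have "x \<in> hom C (cdom C x) X" "y \<in> hom C (cdom C x) X" using that unfolding hom_def by simp_all
    thus ?thesis using Cm[rule_format, of x "cdom C x" y] by simp
  qed
qed

lemma A3: assumes G: "internal_ab_group C X m e n" and G': "internal_ab_group C X' m' e' n'"
  and g: "g \<in> hom C X X'"
  shows "internal_group_hom C m m' g"
proof -
  note [simp] = iag(1-6)[OF G] iag(1-6)[OF G']
  have gd[simp]: "cdom C g = X" "ccod C g = X'" using g unfolding hom_def by auto
  define s' where "s' = ccomp C m' (pair C (proj1 C X' X') (ccomp C n' (proj2 C X' X')))"
  have s': "subtraction C X' s'" unfolding subtraction_def hom_def s'_def using iag(6)[OF G', of "cid C X'"] by simp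
  have c: "ccomp C m (pair C (zmor C X X) (cid C X)) = cid C X"
    using iag(7)[OF G, of "zmor C X X" "cid C X"] by simp
  have c': "ccomp C m' (pair C (zmor C X X') g) = g"
    using iag(7)[OF G', of "zmor C X X'" g] by simp
  show ?thesis unfolding internal_group_hom_def prodmap_def
    by (rule J[OF s', where X=X and Y=X]) (simp_all add: c c')
qed

end

theorem theorem2p1:
  fixes C :: "('o, 'm) cat"
  assumes "pointed C" and "has_finite_products C" and "normal_projections C"
  shows "(\<forall>X X' s s' g. subtraction C X s \<longrightarrow> subtraction C X' s' \<longrightarrow> g \<in> hom C X X' \<longrightarrow>
            homomorphic C s s' g) \<and>
         (\<forall>X s t. subtraction C X s \<longrightarrow> subtraction C X t \<longrightarrow> s = t) \<and>
         (\<forall>X s. subtraction C X s \<longrightarrow>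
            (\<exists>m e n. internal_ab_group C X m e n \<and> s = ccomp C m (prodmap C (cid C X) n))) \<and>
         (\<forall>X X' m e n m' e' n' g. internal_ab_group C X m e n \<longrightarrow> internal_ab_group C X' m' e' n' \<longrightarrow>
            g \<in> hom C X X' \<longrightarrow> internal_group_hom C m m' g)"
proof -
  interpret pnp C using assms by unfold_locales
  show ?thesis using A1 A2u A2e A3 by blast
qed

end
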